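(* For any sequence of pairs of probability distributions $\{(Q_n,G_n)\}$, one has $0\le\underline{\beta}^*\le\overline{\beta}^*\le1$.
   Context: For $\beta\ge0$ let $V_n(\beta)=\mathrm{TV}\big(Q_n^{n},((1-n^{-\beta})Q_n+n^{-\beta}G_n)^{n}\big)$, where $\mathrm{TV}(P,Q)=\sup_A|P(A)-Q(A)|$ is the total variation distance and $P^n$ the $n$-fold product measure. Define $\underline{\beta}^*=\sup\{\beta\ge0: V_n(\beta)\to1\}$ and $\overline{\beta}^*=\inf\{\beta\ge0:V_n(\beta)\to0\}$ (limits as $n\to\infty$). These are the fundamental limits for testing $H_0:Y_i\stackrel{iid}{\sim}Q_n$ versus $H_1:Y_i\stackrel{iid}{\sim}(1-n^{-\beta})Q_n+n^{-\beta}G_n$, $i=1,\dots,n$. *)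

theory Defs
  imports "HOL-Probability.Probability"
begin

definition mixture :: "real \<Rightarrow> 'a measure \<Rightarrow> 'a measure \<Rightarrow> 'a measure" where
  "mixture e P R = measure_of (space P) (sets P)
     (\<lambda>A. ennreal (1 - e) * emeasure P A + ennreal e * emeasure R A)"

definition TV :: "'a measure \<Rightarrow> 'a measure \<Rightarrow> real" where
  "TV P R = (SUP A \<in> sets P. \<bar>measure P A - measure R A\<bar>)"

definition V :: "(nat \<Rightarrow> 'a measure) \<Rightarrow> (nat \<Rightarrow> 'a measure) \<Rightarrow> real \<Rightarrow> nat \<Rightarrow> real" where
  "V Q G \<beta> n = TV (PiM {..<n} (\<lambda>_. Q n))
                   (PiM {..<n} (\<lambda>_. mixture (real n powr (-\<beta>)) (Q n) (G n)))"

text \<open>Lower threshold: sup of beta >= 0 with V_n(beta) -> 1, with the convention sup of the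
  empty set = 0 (the sup is taken within [0, infinity)).\<close>
definition beta_lower :: "(nat \<Rightarrow> 'a measure) \<Rightarrow> (nat \<Rightarrow> 'a measure) \<Rightarrow> real" where
  "beta_lower Q G = Sup (insert 0 {\<beta>. \<beta> \<ge> 0 \<and> (\<lambda>n. V Q G \<beta> n) \<longlonglongrightarrow> 1})"

definition beta_upper :: "(nat \<Rightarrow> 'a measure) \<Rightarrow> (nat \<Rightarrow> 'a measure) \<Rightarrow> real" where
  "beta_upper Q G = Inf {\<beta>. \<beta> \<ge> 0 \<and> (\<lambda>n. V Q G \<beta> n) \<longlonglongrightarrow> 0}"

end

theory Submission
  imports Defs
begin


lemma sets_mixture[simp, measurable_cong]: "sets (mixture e P R) = sets P"
  by (simp add: mixture_def)

lemma space_mixture[simp]: "space (mixture e P R) = space P"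
  by (simp add: mixture_def space_measure_of_conv)

lemma emeasure_mixture:
  assumes R: "sets R = sets P" and A: "A \<in> sets P"
  shows "emeasure (mixture e P R) A = ennreal (1 - e) * emeasure P A + ennreal e * emeasure R A"
  unfolding mixture_def
proof (rule emeasure_measure_of_sigma)
  show "sigma_algebra (space P) (sets P)" ..
  show "positive (sets P) (\<lambda>A. ennreal (1 - e) * emeasure P A + ennreal e * emeasure R A)"
    by (simp add: positive_def)
  show "countably_additive (sets P) (\<lambda>A. ennreal (1 - e) * emeasure P A + ennreal e * emeasure R A)"
  proof (rule countably_additiveI)
    fix A :: "nat \<Rightarrow> _" assume *: "range A \<subseteq> sets P" "disjoint_family A"
    then have **: "range A \<subseteq> sets R" using R by simp
    have "(\<Sum>i. ennreal (1 - e) * emeasure P (A i) + ennreal e * emeasure R (A i))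
        = ennreal (1 - e) * (\<Sum>i. emeasure P (A i)) + ennreal e * (\<Sum>i. emeasure R (A i))"
      by (simp add: suminf_add[symmetric])
    also have "\<dots> = ennreal (1 - e) * emeasure P (\<Union>i. A i) + ennreal e * emeasure R (\<Union>i. A i)"
      using * ** by (simp add: suminf_emeasure)
    finally show "(\<Sum>i. ennreal (1 - e) * emeasure P (A i) + ennreal e * emeasure R (A i))
        = ennreal (1 - e) * emeasure P (\<Union>i. A i) + ennreal e * emeasure R (\<Union>i. A i)" .
  qed
qed (fact A)

lemma prob_space_mixture:
  assumes "prob_space P" "prob_space R" "sets R = sets P" "0 \<le> e" "e \<le> 1"
  shows "prob_space (mixture e P R)"
proof
  have sp: "space R = space P" using assms(3) by (rule sets_eq_imp_space_eq)
  have "emeasure (mixture e P R) (space (mixture e P R)) = ennreal (1 - e) * 1 + ennreal e * 1"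
    using assms prob_space.emeasure_space_1[OF assms(2)] by (simp add: emeasure_mixture sp prob_space.emeasure_space_1)
  also have "\<dots> = 1" using assms by (simp add: ennreal_plus[symmetric])
  finally show "emeasure (mixture e P R) (space (mixture e P R)) = 1" .
qed

lemma mixture_0: "mixture 0 P R = P" if "sets R = sets P"
  by (rule measure_eqI) (simp_all add: emeasure_mixture that)

lemma mixture_1: "mixture 1 P R = R" if "sets R = sets P"
  by (rule measure_eqI) (simp_all add: emeasure_mixture that)

lemma mixture_mixture:
  assumes "prob_space P" "prob_space R" "sets R = sets P" "0 \<le> e" "e \<le> 1" "0 \<le> t" "t \<le> 1"
  shows "mixture t P (mixture e P R) = mixture (t * e) P R"
proof (rule measure_eqI)
  fix A assume A: "A \<in> sets (mixture t P (mixture e P R))"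
  then have A': "A \<in> sets P" by simp
  have "emeasure (mixture t P (mixture e P R)) A
     = ennreal (1 - t) * emeasure P A + ennreal t * (ennreal (1 - e) * emeasure P A + ennreal e * emeasure R A)"
    using assms A' by (simp add: emeasure_mixture)
  also have "\<dots> = (ennreal (1 - t) + ennreal (t * (1 - e))) * emeasure P A + ennreal (t * e) * emeasure R A"
    using assms by (simp add: distrib_left distrib_right ennreal_mult mult.assoc)
  also have "ennreal (1 - t) + ennreal (t * (1 - e)) = ennreal (1 - t * e)"
    using assms mult_left_le[of e t] by (subst ennreal_plus[symmetric]) (auto intro!: arg_cong[where f=ennreal] simp: algebra_simps)
  finally show "emeasure (mixture t P (mixture e P R)) A = emeasure (mixture (t * e) P R) A"
    using assms A' by (simp add: emeasure_mixture)
qed simp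



lemma meas_upd:
  assumes "k \<notin> J" "sets N = sets (M k)"
  shows "(\<lambda>(x, y). x(k := y)) \<in> measurable (PiM J M \<Otimes>\<^sub>M N) (PiM (insert k J) M)"
proof (rule measurable_PiM_single')
  fix i assume i: "i \<in> insert k J"
  show "(\<lambda>\<omega>. (case \<omega> of (x, y) \<Rightarrow> x(k := y)) i) \<in> measurable (PiM J M \<Otimes>\<^sub>M N) (M i)"
  proof (cases "i = k")
    case True
    then show ?thesis using assms
      by (simp add: split_beta measurable_cong_sets[OF refl assms(2)[symmetric]])
  next
    case False
    then have "i \<in> J" using i by simp
    with False show ?thesis by (simp add: split_beta)
  qed
next
  show "(\<lambda>(x, y). x(k := y)) \<in> space (PiM J M \<Otimes>\<^sub>M N) \<rightarrow> (\<Pi>\<^sub>E i\<in>insert k J. space (M i))"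
    using assms sets_eq_imp_space_eq[OF assms(2)]
    by (auto simp: space_pair_measure space_PiM PiE_iff extensional_def split: if_splits)
qed



lemma indicator_section:
  assumes "g \<in> measurable N K" "A \<in> sets K"
  shows "(\<integral>\<^sup>+y. indicator A (g y) \<partial>N) = emeasure N (g -` A \<inter> space N)"
proof -
  have "(\<integral>\<^sup>+y. indicator A (g y) \<partial>N) = (\<integral>\<^sup>+y. indicator (g -` A \<inter> space N) y \<partial>N)"
    by (rule nn_integral_cong) (simp add: indicator_def)
  also have "\<dots> = emeasure N (g -` A \<inter> space N)"
    using assms by (intro nn_integral_indicator measurable_sets)
  finally show ?thesis .
qed

lemma psf: "(\<And>i. prob_space (M i)) \<Longrightarrow> product_sigma_finite M"
  unfolding product_sigma_finite_def by (simp add: prob_space_imp_sigma_finite)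

lemma L1_aux:
  fixes M :: "nat \<Rightarrow> 'a measure"
  assumes J: "finite J" "k \<notin> J" and M: "\<And>i. prob_space (M i)"
    and N: "prob_space N" "sets N = sets (M k)"
    and A: "A \<in> sets (PiM (insert k J) M)"
  shows "emeasure (PiM (insert k J) (M(k:=N))) A
      = (\<integral>\<^sup>+x. emeasure N ((\<lambda>y. x(k:=y)) -` A \<inter> space N) \<partial>PiM J M)"
    and "(\<lambda>x. emeasure N ((\<lambda>y. x(k:=y)) -` A \<inter> space N)) \<in> borel_measurable (PiM J M)"
proof -
  have MN: "\<And>i. prob_space ((M(k:=N)) i)" using M N by simp
  interpret PN: product_sigma_finite "M(k:=N)" by (rule psf[OF MN])
  interpret N: prob_space N by (rule N)
  have PJ: "PiM J (M(k:=N)) = PiM J M" using J(2) by (auto intro!: PiM_cong)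
  have sN: "sets (PiM (insert k J) (M(k:=N))) = sets (PiM (insert k J) M)"
    by (rule sets_PiM_cong) (auto simp: N)
  have A': "A \<in> sets (PiM (insert k J) (M(k:=N)))" using A sN by simp
  have mu: "(\<lambda>(x, y). x(k := y)) \<in> measurable (PiM J (M(k:=N)) \<Otimes>\<^sub>M N) (PiM (insert k J) (M(k:=N)))"
    by (rule meas_upd) (use J in auto)
  have ind_meas: "(\<lambda>(x,y). indicator A (x(k:=y)) :: ennreal) \<in> borel_measurable (PiM J M \<Otimes>\<^sub>M N)"
  proof -
    have "(\<lambda>z. indicator A ((\<lambda>(x, y). x(k := y)) z) :: ennreal) \<in> borel_measurable (PiM J M \<Otimes>\<^sub>M N)"
      using mu A' PJ by (intro measurable_compose[OF _ borel_measurable_indicator]) simp_all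
    then show ?thesis by (simp add: split_beta)
  qed
  have eq: "\<And>x. x \<in> space (PiM J M) \<Longrightarrow> (\<integral>\<^sup>+y. indicator A (x(k:=y)) \<partial>N) = emeasure N ((\<lambda>y. x(k:=y)) -` A \<inter> space N)"
  proof -
    fix x assume x: "x \<in> space (PiM J M)"
    have "(\<lambda>y. x(k:=y)) \<in> measurable ((M(k:=N)) k) (PiM (insert k J) (M(k:=N)))"
      using measurable_component_update[OF _ J(2), of x "M(k:=N)"] x PJ by metis
    then show "?thesis x" using A' by (intro indicator_section) auto
  qed
  have "emeasure (PiM (insert k J) (M(k:=N))) A = (\<integral>\<^sup>+x. indicator A x \<partial>PiM (insert k J) (M(k:=N)))"
    using A' by simp
  also have "\<dots> = (\<integral>\<^sup>+x. (\<integral>\<^sup>+y. indicator A (x(k:=y)) \<partial>N) \<partial>PiM J M)"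
    using PN.product_nn_integral_insert[OF J, of "indicator A"] A' PJ by simp
  also have "\<dots> = (\<integral>\<^sup>+x. emeasure N ((\<lambda>y. x(k:=y)) -` A \<inter> space N) \<partial>PiM J M)"
    by (rule nn_integral_cong) (rule eq)
  finally show "emeasure (PiM (insert k J) (M(k:=N))) A
      = (\<integral>\<^sup>+x. emeasure N ((\<lambda>y. x(k:=y)) -` A \<inter> space N) \<partial>PiM J M)" .
  have "(\<lambda>x. \<integral>\<^sup>+y. indicator A (x(k:=y)) \<partial>N) \<in> borel_measurable (PiM J M)"
    using N.borel_measurable_nn_integral[of "\<lambda>x y. indicator A (x(k:=y))" "PiM J M"] ind_meas
    by simp
  then show "(\<lambda>x. emeasure N ((\<lambda>y. x(k:=y)) -` A \<inter> space N)) \<in> borel_measurable (PiM J M)"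
    by (rule measurable_cong[THEN iffD1, rotated]) (simp add: eq)
qed



lemma emeasure_mixture':
  assumes R: "sets R = sets P"
  shows "emeasure (mixture e P R) A = ennreal (1 - e) * emeasure P A + ennreal e * emeasure R A"
proof (cases "A \<in> sets P")
  case True then show ?thesis using emeasure_mixture[OF R] by simp
next
  case False
  then show ?thesis using R by (simp add: emeasure_notin_sets)
qed

lemma L1:
  fixes M :: "nat \<Rightarrow> 'a measure"
  assumes J: "finite J" "k \<notin> J" and M: "\<And>i. prob_space (M i)"
    and Q: "prob_space Q" "sets Q = sets (M k)" and R: "prob_space R" "sets R = sets Q"
    and Mk: "M k = mixture t Q R"
    and A: "A \<in> sets (PiM (insert k J) M)"
  shows "emeasure (PiM (insert k J) M) A = ennreal (1-t) * emeasure (PiM (insert k J) (M(k:=Q))) A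
           + ennreal t * emeasure (PiM (insert k J) (M(k:=R))) A"
proof -
  have sR: "sets R = sets (M k)" using R Q by simp
  have spQ: "space Q = space (M k)" "space R = space (M k)"
    using sets_eq_imp_space_eq Q(2) sR by auto
  define S where "S x = (\<lambda>y. x(k:=y)) -` A \<inter> space (M k)" for x
  have eQ: "emeasure (PiM (insert k J) (M(k:=Q))) A = (\<integral>\<^sup>+x. emeasure Q (S x) \<partial>PiM J M)"
    and mQ: "(\<lambda>x. emeasure Q (S x)) \<in> borel_measurable (PiM J M)"
    using L1_aux[OF J M Q A] spQ unfolding S_def by simp_all
  have eR: "emeasure (PiM (insert k J) (M(k:=R))) A = (\<integral>\<^sup>+x. emeasure R (S x) \<partial>PiM J M)"
    and mR: "(\<lambda>x. emeasure R (S x)) \<in> borel_measurable (PiM J M)"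
    using L1_aux[OF J M R(1) sR A] spQ unfolding S_def by simp_all
  have eM: "emeasure (PiM (insert k J) M) A = (\<integral>\<^sup>+x. emeasure (M k) (S x) \<partial>PiM J M)"
    using L1_aux(1)[OF J M M refl A] unfolding S_def by simp
  also have "\<dots> = (\<integral>\<^sup>+x. ennreal (1-t) * emeasure Q (S x) + ennreal t * emeasure R (S x) \<partial>PiM J M)"
    by (simp add: Mk emeasure_mixture'[OF R(2)])
  also have "\<dots> = ennreal (1-t) * (\<integral>\<^sup>+x. emeasure Q (S x) \<partial>PiM J M) + ennreal t * (\<integral>\<^sup>+x. emeasure R (S x) \<partial>PiM J M)"
    using mQ mR by (simp add: nn_integral_add nn_integral_cmult)
  finally show ?thesis using eQ eR by simp
qed



lemma L2_aux:
  fixes M :: "nat \<Rightarrow> 'a measure"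
  assumes J: "finite J" "k \<notin> J" and M: "\<And>i. prob_space (M i)"
    and A: "A \<in> sets (PiM (insert k J) M)"
  shows "emeasure (PiM (insert k J) M) A
      = (\<integral>\<^sup>+y. emeasure (PiM J M) ((\<lambda>x. x(k:=y)) -` A \<inter> space (PiM J M)) \<partial>M k)"
    and "(\<lambda>y. emeasure (PiM J M) ((\<lambda>x. x(k:=y)) -` A \<inter> space (PiM J M))) \<in> borel_measurable (M k)"
    and "\<And>y. y \<in> space (M k) \<Longrightarrow> (\<lambda>x. x(k:=y)) -` A \<inter> space (PiM J M) \<in> sets (PiM J M)"
proof -
  interpret PM: product_sigma_finite M by (rule psf[OF M])
  interpret PJ: prob_space "PiM J M" by (intro prob_space_PiM M)
  have mu: "(\<lambda>(x, y). x(k := y)) \<in> measurable (PiM J M \<Otimes>\<^sub>M M k) (PiM (insert k J) M)"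
    by (rule meas_upd) (use J in auto)
  have mu': "(\<lambda>(y, x). x(k := y)) \<in> measurable (M k \<Otimes>\<^sub>M PiM J M) (PiM (insert k J) M)"
    using measurable_compose[OF measurable_pair_swap' mu] by (simp add: split_beta comp_def)
  have my: "\<And>y. y \<in> space (M k) \<Longrightarrow> (\<lambda>x. x(k:=y)) \<in> measurable (PiM J M) (PiM (insert k J) M)"
  proof -
    fix y assume y: "y \<in> space (M k)"
    have "(\<lambda>x. (\<lambda>(y, x). x(k := y)) (y, x)) \<in> measurable (PiM J M) (PiM (insert k J) M)"
      using y by (intro measurable_compose[OF _ mu'] measurable_Pair) auto
    then show "?thesis y" by simp
  qed
  then show "\<And>y. y \<in> space (M k) \<Longrightarrow> (\<lambda>x. x(k:=y)) -` A \<inter> space (PiM J M) \<in> sets (PiM J M)"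
    using A by (intro measurable_sets) auto
  have ind_meas: "(\<lambda>(y,x). indicator A (x(k:=y)) :: ennreal) \<in> borel_measurable (M k \<Otimes>\<^sub>M PiM J M)"
  proof -
    have "(\<lambda>z. indicator A ((\<lambda>(y, x). x(k := y)) z) :: ennreal) \<in> borel_measurable (M k \<Otimes>\<^sub>M PiM J M)"
      using mu' A by (intro measurable_compose[OF _ borel_measurable_indicator]) simp_all
    then show ?thesis by (simp add: split_beta)
  qed
  have eq: "\<And>y. y \<in> space (M k) \<Longrightarrow> (\<integral>\<^sup>+x. indicator A (x(k:=y)) \<partial>PiM J M)
      = emeasure (PiM J M) ((\<lambda>x. x(k:=y)) -` A \<inter> space (PiM J M))"
    using my A by (intro indicator_section) auto
  have "emeasure (PiM (insert k J) M) A = (\<integral>\<^sup>+x. indicator A x \<partial>PiM (insert k J) M)"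
    using A by simp
  also have "\<dots> = (\<integral>\<^sup>+y. (\<integral>\<^sup>+x. indicator A (x(k:=y)) \<partial>PiM J M) \<partial>M k)"
    using A by (intro PM.product_nn_integral_insert_rev J) simp
  also have "\<dots> = (\<integral>\<^sup>+y. emeasure (PiM J M) ((\<lambda>x. x(k:=y)) -` A \<inter> space (PiM J M)) \<partial>M k)"
    by (rule nn_integral_cong) (rule eq)
  finally show "emeasure (PiM (insert k J) M) A
      = (\<integral>\<^sup>+y. emeasure (PiM J M) ((\<lambda>x. x(k:=y)) -` A \<inter> space (PiM J M)) \<partial>M k)" .
  have "(\<lambda>y. \<integral>\<^sup>+x. indicator A (x(k:=y)) \<partial>PiM J M) \<in> borel_measurable (M k)"
    using PJ.borel_measurable_nn_integral[of "\<lambda>y x. indicator A (x(k:=y))" "M k"] ind_meas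
    by simp
  then show "(\<lambda>y. emeasure (PiM J M) ((\<lambda>x. x(k:=y)) -` A \<inter> space (PiM J M))) \<in> borel_measurable (M k)"
    by (rule measurable_cong[THEN iffD1, rotated]) (simp add: eq)
qed

lemma L2:
  fixes M N :: "nat \<Rightarrow> 'a measure"
  assumes J: "finite J" "k \<notin> J" and M: "\<And>i. prob_space (M i)" and N: "\<And>i. prob_space (N i)"
    and sMN: "\<And>i. sets (N i) = sets (M i)" and Nk: "N k = M k"
    and c: "0 \<le> c"
    and H: "\<And>B. B \<in> sets (PiM J M) \<Longrightarrow> measure (PiM J M) B \<le> measure (PiM J N) B + c"
    and A: "A \<in> sets (PiM (insert k J) M)"
  shows "measure (PiM (insert k J) M) A \<le> measure (PiM (insert k J) N) A + c"
proof -
  interpret PJM: prob_space "PiM J M" by (intro prob_space_PiM M)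
  interpret PJN: prob_space "PiM J N" by (intro prob_space_PiM N)
  interpret PIM: prob_space "PiM (insert k J) M" by (intro prob_space_PiM M)
  interpret PIN: prob_space "PiM (insert k J) N" by (intro prob_space_PiM N)
  interpret Mk: prob_space "M k" by (rule M)
  have sJ: "sets (PiM J N) = sets (PiM J M)" by (rule sets_PiM_cong) (auto simp: sMN)
  have sI: "sets (PiM (insert k J) N) = sets (PiM (insert k J) M)" by (rule sets_PiM_cong) (auto simp: sMN)
  have spJ: "space (PiM J N) = space (PiM J M)" by (rule sets_eq_imp_space_eq[OF sJ])
  have AN: "A \<in> sets (PiM (insert k J) N)" using A sI by simp
  define T where "T y = (\<lambda>x. x(k:=y)) -` A \<inter> space (PiM J M)" for y
  note m = L2_aux[OF J M A, folded T_def]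
  note n = L2_aux[OF J N AN, unfolded spJ Nk, folded T_def]
  have pt: "emeasure (PiM J M) (T y) \<le> emeasure (PiM J N) (T y) + ennreal c" if y: "y \<in> space (M k)" for y
  proof -
    have Ty: "T y \<in> sets (PiM J M)" using m(3) y by simp
    have "emeasure (PiM J M) (T y) = ennreal (measure (PiM J M) (T y))"
      by (simp add: PJM.emeasure_eq_measure)
    also have "\<dots> \<le> ennreal (measure (PiM J N) (T y) + c)"
      using H[OF Ty] by (simp add: ennreal_leI)
    also have "\<dots> = emeasure (PiM J N) (T y) + ennreal c"
      using c by (simp add: PJN.emeasure_eq_measure ennreal_plus)
    finally show ?thesis .
  qed
  have "emeasure (PiM (insert k J) M) A = (\<integral>\<^sup>+y. emeasure (PiM J M) (T y) \<partial>M k)" by (rule m(1))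
  also have "\<dots> \<le> (\<integral>\<^sup>+y. emeasure (PiM J N) (T y) + ennreal c \<partial>M k)"
    by (rule nn_integral_mono) (rule pt)
  also have "\<dots> = (\<integral>\<^sup>+y. emeasure (PiM J N) (T y) \<partial>M k) + ennreal c"
    using n(2) by (simp add: nn_integral_add Mk.emeasure_space_1)
  also have "\<dots> = emeasure (PiM (insert k J) N) A + ennreal c" using n(1) by simp
  finally have "ennreal (measure (PiM (insert k J) M) A) \<le> ennreal (measure (PiM (insert k J) N) A + c)"
    using c by (simp add: PIM.emeasure_eq_measure PIN.emeasure_eq_measure ennreal_plus)
  then show ?thesis using c by (metis ennreal_le_iff add_nonneg_nonneg measure_nonneg)
qed



lemma abs_prob_diff_le1:
  assumes "prob_space P" "prob_space R"
  shows "\<bar>measure P A - measure R B\<bar> \<le> 1"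
  using prob_space.prob_le_1[OF assms(1), of A] prob_space.prob_le_1[OF assms(2), of B]
    measure_nonneg[of P A] measure_nonneg[of R B] by linarith

lemma TV_bdd:
  assumes "prob_space P" "prob_space R"
  shows "bdd_above ((\<lambda>A. \<bar>measure P A - measure R A\<bar>) ` sets P)"
  using abs_prob_diff_le1[OF assms] by (intro bdd_aboveI[of _ 1]) auto

lemma TV_upper:
  assumes "prob_space P" "prob_space R" "A \<in> sets P"
  shows "\<bar>measure P A - measure R A\<bar> \<le> TV P R"
  unfolding TV_def using assms by (intro cSUP_upper TV_bdd)

lemma TV_le:
  assumes "\<And>A. A \<in> sets P \<Longrightarrow> \<bar>measure P A - measure R A\<bar> \<le> c"
  shows "TV P R \<le> c"
  unfolding TV_def using assms sets.top[of P] by (intro cSUP_least) auto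

lemma L2abs:
  fixes M N :: "nat \<Rightarrow> 'a measure"
  assumes J: "finite J" "k \<notin> J" and M: "\<And>i. prob_space (M i)" and N: "\<And>i. prob_space (N i)"
    and sMN: "\<And>i. sets (N i) = sets (M i)" and Nk: "N k = M k"
    and c: "0 \<le> c"
    and H: "\<And>B. B \<in> sets (PiM J M) \<Longrightarrow> \<bar>measure (PiM J M) B - measure (PiM J N) B\<bar> \<le> c"
    and A: "A \<in> sets (PiM (insert k J) M)"
  shows "\<bar>measure (PiM (insert k J) M) A - measure (PiM (insert k J) N) A\<bar> \<le> c"
proof -
  have sJ: "sets (PiM J N) = sets (PiM J M)" by (rule sets_PiM_cong) (auto simp: sMN)
  have sI: "sets (PiM (insert k J) N) = sets (PiM (insert k J) M)" by (rule sets_PiM_cong) (auto simp: sMN)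
  have 1: "measure (PiM (insert k J) M) A \<le> measure (PiM (insert k J) N) A + c"
    using H by (intro L2[OF J M N sMN Nk c _ A]) (fastforce simp add: abs_le_iff)
  have 2: "measure (PiM (insert k J) N) A \<le> measure (PiM (insert k J) M) A + c"
    using H A sJ sI sMN Nk by (intro L2[OF J N M _ _ c]) (auto simp: abs_le_iff, fastforce)
  from 1 2 show ?thesis by linarith
qed

lemma L1r:
  fixes M :: "nat \<Rightarrow> 'a measure"
  assumes J: "finite J" "k \<notin> J" and M: "\<And>i. prob_space (M i)"
    and Q: "prob_space Q" "sets Q = sets (M k)" and R: "prob_space R" "sets R = sets Q"
    and Mk: "M k = mixture t Q R" and t: "0 \<le> t" "t \<le> 1"
    and A: "A \<in> sets (PiM (insert k J) M)"
  shows "measure (PiM (insert k J) M) A = (1-t) * measure (PiM (insert k J) (M(k:=Q))) A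
           + t * measure (PiM (insert k J) (M(k:=R))) A"
proof -
  have MQ: "\<And>i. prob_space ((M(k:=Q)) i)" using M Q by simp
  have MR: "\<And>i. prob_space ((M(k:=R)) i)" using M R by simp
  interpret PM: prob_space "PiM (insert k J) M" by (intro prob_space_PiM M)
  interpret PQ: prob_space "PiM (insert k J) (M(k:=Q))" by (intro prob_space_PiM MQ)
  interpret PR: prob_space "PiM (insert k J) (M(k:=R))" by (intro prob_space_PiM MR)
  have "ennreal (measure (PiM (insert k J) M) A) = ennreal ((1-t) * measure (PiM (insert k J) (M(k:=Q))) A
           + t * measure (PiM (insert k J) (M(k:=R))) A)"
    using L1[OF J M Q R Mk A] t
    by (simp add: PM.emeasure_eq_measure PQ.emeasure_eq_measure PR.emeasure_eq_measure ennreal_mult ennreal_plus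
         del: fun_upd_apply)
  then show ?thesis using t by (subst (asm) ennreal_inj) auto
qed

lemma L3:
  fixes Q P :: "'a measure"
  assumes Q: "prob_space Q" and P: "prob_space P" "sets P = sets Q"
    and I: "finite I" and JI: "J \<subseteq> I"
  shows "TV (PiM J (\<lambda>_. Q)) (PiM J (\<lambda>_. P)) \<le> TV (PiM I (\<lambda>_. Q)) (PiM I (\<lambda>_. P))"
proof (rule TV_le)
  interpret PQ: product_prob_space "\<lambda>_. Q" I
    by (rule product_prob_space.intro[OF psf]) (auto intro!: product_prob_space_axioms.intro Q)
  interpret PP: product_prob_space "\<lambda>_. P" I
    by (rule product_prob_space.intro[OF psf]) (auto intro!: product_prob_space_axioms.intro P)
  have spP: "space P = space Q" by (rule sets_eq_imp_space_eq[OF P(2)])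
  have sJ: "sets (PiM J (\<lambda>_. P)) = sets (PiM J (\<lambda>_. Q))" by (rule sets_PiM_cong) (auto simp: P)
  have sI: "sets (PiM I (\<lambda>_. P)) = sets (PiM I (\<lambda>_. Q))" by (rule sets_PiM_cong) (auto simp: P)
  have fJ: "finite J" using I JI by (rule finite_subset[rotated])
  fix B assume B: "B \<in> sets (PiM J (\<lambda>_. Q))"
  have embeq: "prod_emb I (\<lambda>_. P) J B = prod_emb I (\<lambda>_. Q) J B"
    by (simp add: prod_emb_def spP)
  have e1: "measure (PiM I (\<lambda>_. Q)) (prod_emb I (\<lambda>_. Q) J B) = measure (PiM J (\<lambda>_. Q)) B"
    using PQ.emeasure_PiM_emb'[OF JI fJ B] by (simp add: measure_def)
  have e2: "measure (PiM I (\<lambda>_. P)) (prod_emb I (\<lambda>_. Q) J B) = measure (PiM J (\<lambda>_. P)) B"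
    using PP.emeasure_PiM_emb'[OF JI fJ, of B] B sJ embeq by (simp add: measure_def)
  have "prod_emb I (\<lambda>_. Q) J B \<in> sets (PiM I (\<lambda>_. Q))" using JI B by simp
  then have "\<bar>measure (PiM I (\<lambda>_. Q)) (prod_emb I (\<lambda>_. Q) J B) - measure (PiM I (\<lambda>_. P)) (prod_emb I (\<lambda>_. Q) J B)\<bar>
      \<le> TV (PiM I (\<lambda>_. Q)) (PiM I (\<lambda>_. P))"
    using Q P by (intro TV_upper prob_space_PiM) auto
  then show "\<bar>measure (PiM J (\<lambda>_. Q)) B - measure (PiM J (\<lambda>_. P)) B\<bar> \<le> TV (PiM I (\<lambda>_. Q)) (PiM I (\<lambda>_. P))"
    using e1 e2 by simp
qed



lemma convex_bound:
  fixes s x y C D :: real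
  assumes "0 \<le> s" "s \<le> 1" "\<bar>x\<bar> \<le> C" "\<bar>y\<bar> \<le> D"
  shows "\<bar>(1 - s) * x + s * y\<bar> \<le> (1 - s) * C + s * D"
proof -
  have "\<bar>(1 - s) * x\<bar> \<le> (1 - s) * C" using assms by (simp add: abs_mult mult_left_mono)
  moreover have "\<bar>s * y\<bar> \<le> s * D" using assms by (simp add: abs_mult mult_left_mono)
  ultimately show ?thesis by (smt (verit) abs_triangle_ineq)
qed

lemma hybrid:
  fixes Q P :: "'a measure" and s :: "nat \<Rightarrow> real"
  assumes Q: "prob_space Q" and P: "prob_space P" "sets P = sets Q"
    and s01: "\<And>i. 0 \<le> s i \<and> s i \<le> 1" and I: "finite I"
  shows "A \<in> sets (PiM I (\<lambda>_. Q)) \<Longrightarrow>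
    \<bar>measure (PiM I (\<lambda>_. Q)) A - measure (PiM I (\<lambda>i. mixture (s i) Q P)) A\<bar> \<le> (\<Sum>i\<in>I. s i)"
  using I
proof (induction I arbitrary: A rule: finite_induct)
  case empty
  then show ?case by (simp add: PiM_empty)
next
  case (insert k J)
  define mu where "mu = (\<lambda>i. mixture (s i) Q P)"
  have mup: "\<And>i. prob_space (mu i)" unfolding mu_def using Q P s01 by (intro prob_space_mixture) auto
  have smu: "\<And>i. sets (mu i) = sets Q" unfolding mu_def by simp
  have Qp: "\<And>i. prob_space ((\<lambda>_. Q) i)" using Q by simp
  have sI: "sets (PiM (insert k J) mu) = sets (PiM (insert k J) (\<lambda>_. Q))" by (rule sets_PiM_cong) (auto simp: smu)
  have A: "A \<in> sets (PiM (insert k J) (\<lambda>_. Q))" by fact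
  then have A': "A \<in> sets (PiM (insert k J) mu)" using sI by simp
  have dec: "measure (PiM (insert k J) mu) A = (1 - s k) * measure (PiM (insert k J) (mu(k:=Q))) A
           + s k * measure (PiM (insert k J) (mu(k:=P))) A"
    by (rule L1r[OF insert(1,2) mup Q _ P _ _ _ A']) (auto simp: smu mu_def s01)
  have muQp: "\<And>i. prob_space ((mu(k:=Q)) i)" using mup Q by simp
  have muPp: "\<And>i. prob_space ((mu(k:=P)) i)" using mup P by simp
  have PJ: "PiM J (mu(k:=Q)) = PiM J mu" using insert(2) by (auto intro!: PiM_cong)
  have ha: "\<bar>measure (PiM (insert k J) (\<lambda>_. Q)) A - measure (PiM (insert k J) (mu(k:=Q))) A\<bar> \<le> (\<Sum>i\<in>J. s i)"
  proof (rule L2abs[OF insert(1,2) Qp muQp _ _ _ _ A])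
    show "\<And>i. sets ((mu(k:=Q)) i) = sets Q" by (simp add: smu)
    show "(mu(k:=Q)) k = Q" by simp
    show "0 \<le> (\<Sum>i\<in>J. s i)" using s01 by (simp add: sum_nonneg)
    fix B assume "B \<in> sets (PiM J (\<lambda>_. Q))"
    then show "\<bar>measure (PiM J (\<lambda>_. Q)) B - measure (PiM J (mu(k:=Q))) B\<bar> \<le> (\<Sum>i\<in>J. s i)"
      using insert.IH[of B] by (subst PJ) (simp add: mu_def)
  qed
  have hb: "\<bar>measure (PiM (insert k J) (\<lambda>_. Q)) A - measure (PiM (insert k J) (mu(k:=P))) A\<bar> \<le> 1"
    by (intro abs_prob_diff_le1 prob_space_PiM Qp muPp)
  have "measure (PiM (insert k J) (\<lambda>_. Q)) A - measure (PiM (insert k J) mu) A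
     = (1 - s k) * (measure (PiM (insert k J) (\<lambda>_. Q)) A - measure (PiM (insert k J) (mu(k:=Q))) A)
       + s k * (measure (PiM (insert k J) (\<lambda>_. Q)) A - measure (PiM (insert k J) (mu(k:=P))) A)"
    unfolding dec by (simp add: algebra_simps)
  also have "\<bar>\<dots>\<bar> \<le> (1 - s k) * (\<Sum>i\<in>J. s i) + s k * 1"
    using s01[of k] ha hb by (intro convex_bound) auto
  also have "\<dots> \<le> (\<Sum>i\<in>insert k J. s i)"
    using insert(1,2) s01 sum_nonneg[of J s] by (simp add: algebra_simps mult_nonneg_nonneg)
  finally show ?case unfolding mu_def .
qed



lemma mono_claim:
  fixes Q P :: "'a measure"
  assumes Q: "prob_space Q" and P: "prob_space P" "sets P = sets Q" and F: "finite F"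
  shows "\<forall>(I::nat set) (s::nat \<Rightarrow> real) A. finite I \<longrightarrow> F \<subseteq> I \<longrightarrow> (\<forall>i. 0 \<le> s i \<and> s i \<le> 1) \<longrightarrow> (\<forall>i\<in>I - F. s i = 1)
     \<longrightarrow> A \<in> sets (PiM I (\<lambda>_. Q)) \<longrightarrow>
    \<bar>measure (PiM I (\<lambda>_. Q)) A - measure (PiM I (\<lambda>i. mixture (s i) Q P)) A\<bar>
      \<le> TV (PiM I (\<lambda>_. Q)) (PiM I (\<lambda>_. P))"
  using F
proof (induction F rule: finite_induct)
  case empty
  show ?case
  proof (intro allI impI)
    fix I :: "nat set" and s :: "nat \<Rightarrow> real" and A assume I: "finite I" and "{} \<subseteq> I" and s01: "\<forall>i. 0 \<le> s i \<and> s i \<le> 1"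
      and s1: "\<forall>i\<in>I - {}. s i = 1" and A: "A \<in> sets (PiM I (\<lambda>_. Q))"
    have "PiM I (\<lambda>i. mixture (s i) Q P) = PiM I (\<lambda>_. P)"
      using s1 by (intro PiM_cong) (auto simp: mixture_1 P)
    then show "\<bar>measure (PiM I (\<lambda>_. Q)) A - measure (PiM I (\<lambda>i. mixture (s i) Q P)) A\<bar>
      \<le> TV (PiM I (\<lambda>_. Q)) (PiM I (\<lambda>_. P))"
      using A Q P by (simp add: TV_upper prob_space_PiM)
  qed
next
  case (insert k F')
  show ?case
  proof (intro allI impI)
    fix I :: "nat set" and s :: "nat \<Rightarrow> real" and A assume I: "finite I" and FI: "insert k F' \<subseteq> I" and s01: "\<forall>i. 0 \<le> s i \<and> s i \<le> 1"
      and s1: "\<forall>i\<in>I - insert k F'. s i = 1" and A: "A \<in> sets (PiM I (\<lambda>_. Q))"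
    define J where "J = I - {k}"
    have IJ: "I = insert k J" "k \<notin> J" "finite J" using FI I by (auto simp: J_def)
    define mu where "mu = (\<lambda>i. mixture (s i) Q P)"
    have mup: "\<And>i. prob_space (mu i)" unfolding mu_def using Q P s01 by (intro prob_space_mixture) auto
    have smu: "\<And>i. sets (mu i) = sets Q" unfolding mu_def by simp
    have Qp: "\<And>i. prob_space ((\<lambda>_. Q) i)" using Q by simp
    have sI: "sets (PiM I mu) = sets (PiM I (\<lambda>_. Q))" by (rule sets_PiM_cong) (auto simp: smu)
    have A': "A \<in> sets (PiM (insert k J) mu)" using sI A IJ by simp
    have A'': "A \<in> sets (PiM (insert k J) (\<lambda>_. Q))" using A IJ by simp
    have dec: "measure (PiM (insert k J) mu) A = (1 - s k) * measure (PiM (insert k J) (mu(k:=Q))) A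
             + s k * measure (PiM (insert k J) (mu(k:=P))) A"
      by (rule L1r[OF IJ(3,2) mup Q _ P _ _ _ A']) (auto simp: smu mu_def s01)
    have muQp: "\<And>i. prob_space ((mu(k:=Q)) i)" using mup Q by simp
    have PJ: "PiM J (mu(k:=Q)) = PiM J mu" using IJ(2) by (auto intro!: PiM_cong)
    let ?TI = "TV (PiM I (\<lambda>_. Q)) (PiM I (\<lambda>_. P))"
    let ?TJ = "TV (PiM J (\<lambda>_. Q)) (PiM J (\<lambda>_. P))"
    have TJI: "?TJ \<le> ?TI" using L3[OF Q P I] IJ by auto
    have TJ0: "0 \<le> ?TJ"
    proof -
      have "\<bar>measure (PiM J (\<lambda>_. Q)) {} - measure (PiM J (\<lambda>_. P)) {}\<bar> \<le> ?TJ"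
        using Q P by (intro TV_upper prob_space_PiM) auto
      then show ?thesis by simp
    qed
    have ha: "\<bar>measure (PiM (insert k J) (\<lambda>_. Q)) A - measure (PiM (insert k J) (mu(k:=Q))) A\<bar> \<le> ?TJ"
    proof (rule L2abs[OF IJ(3,2) Qp muQp _ _ TJ0 _ A''])
      show "\<And>i. sets ((mu(k:=Q)) i) = sets Q" by (simp add: smu)
      show "(mu(k:=Q)) k = Q" by simp
      fix B assume B: "B \<in> sets (PiM J (\<lambda>_. Q))"
      have "F' \<subseteq> J" "\<forall>i\<in>J - F'. s i = 1" using FI s1 insert(2) by (auto simp: J_def)
      then have "\<bar>measure (PiM J (\<lambda>_. Q)) B - measure (PiM J mu) B\<bar> \<le> ?TJ"
        using insert.IH IJ(3) s01 B unfolding mu_def by blast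
      then show "\<bar>measure (PiM J (\<lambda>_. Q)) B - measure (PiM J (mu(k:=Q))) B\<bar> \<le> ?TJ"
        by (subst PJ)
    qed
    have muP: "mu(k:=P) = (\<lambda>i. mixture ((s(k:=1)) i) Q P)"
      by (auto simp: mu_def mixture_1 P)
    have hb: "\<bar>measure (PiM I (\<lambda>_. Q)) A - measure (PiM I (mu(k:=P))) A\<bar> \<le> ?TI"
    proof -
      have "\<forall>i. 0 \<le> (s(k:=1)) i \<and> (s(k:=1)) i \<le> 1" "\<forall>i\<in>I - F'. (s(k:=1)) i = 1" "F' \<subseteq> I"
        using s01 s1 FI by auto
      then show ?thesis unfolding muP using insert.IH I A by blast
    qed
    have "measure (PiM I (\<lambda>_. Q)) A - measure (PiM I mu) A
       = (1 - s k) * (measure (PiM I (\<lambda>_. Q)) A - measure (PiM I (mu(k:=Q))) A)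
         + s k * (measure (PiM I (\<lambda>_. Q)) A - measure (PiM I (mu(k:=P))) A)"
      unfolding IJ(1) dec by (simp add: algebra_simps)
    also have "\<bar>\<dots>\<bar> \<le> (1 - s k) * ?TI + s k * ?TI"
      using s01 ha hb TJI IJ(1) by (intro convex_bound) auto
    also have "\<dots> = ?TI" by (simp add: algebra_simps)
    finally show "\<bar>measure (PiM I (\<lambda>_. Q)) A - measure (PiM I (\<lambda>i. mixture (s i) Q P)) A\<bar> \<le> ?TI"
      unfolding mu_def .
  qed
qed



lemma TV_nonneg:
  assumes "prob_space P" "prob_space R"
  shows "0 \<le> TV P R"
proof -
  have "\<bar>measure P {} - measure R {}\<bar> \<le> TV P R" using assms by (intro TV_upper) auto
  then show ?thesis by simp
qed

lemma eps_facts: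
  assumes "0 \<le> \<beta>"
  shows "0 \<le> real n powr (-\<beta>)" "real n powr (-\<beta>) \<le> 1"
proof -
  show "0 \<le> real n powr (-\<beta>)" by simp
  show "real n powr (-\<beta>) \<le> 1"
  proof (cases "n = 0")
    case True then show ?thesis by simp
  next
    case False
    then have "1 \<le> real n" by simp
    then have "1 \<le> real n powr \<beta>" using assms by (intro ge_one_powr_ge_zero) auto
    then show ?thesis by (simp add: powr_minus_divide divide_le_eq)
  qed
qed

lemma V_nonneg:
  fixes Q G :: "nat \<Rightarrow> 'a measure"
  assumes Q: "\<And>n. prob_space (Q n)" and G: "\<And>n. prob_space (G n)" and sG: "\<And>n. sets (G n) = sets (Q n)"
    and b: "0 \<le> \<beta>"
  shows "0 \<le> V Q G \<beta> n"
proof -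
  have e: "0 \<le> real n powr (-\<beta>)" "real n powr (-\<beta>) \<le> 1"
    using eps_facts[OF b] by auto
  show ?thesis unfolding V_def
    using Q G sG e by (intro TV_nonneg prob_space_PiM prob_space_mixture) auto
qed

lemma V_small:
  fixes Q G :: "nat \<Rightarrow> 'a measure"
  assumes Q: "\<And>n. prob_space (Q n)" and G: "\<And>n. prob_space (G n)" and sG: "\<And>n. sets (G n) = sets (Q n)"
    and b: "0 \<le> \<beta>"
  shows "V Q G \<beta> n \<le> real n * real n powr (-\<beta>)"
  unfolding V_def
proof (rule TV_le)
  fix A assume A: "A \<in> sets (PiM {..<n} (\<lambda>_. Q n))"
  have "\<bar>measure (PiM {..<n} (\<lambda>_. Q n)) A - measure (PiM {..<n} (\<lambda>i. mixture ((\<lambda>_. real n powr (-\<beta>)) i) (Q n) (G n))) A\<bar>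
     \<le> (\<Sum>i\<in>{..<n}. (\<lambda>_. real n powr (-\<beta>)) i)"
    using eps_facts[OF b, of n] by (intro hybrid[OF Q G sG _ _ A]) auto
  then show "\<bar>measure (PiM {..<n} (\<lambda>_. Q n)) A - measure (PiM {..<n} (\<lambda>_. mixture (real n powr (-\<beta>)) (Q n) (G n))) A\<bar>
     \<le> real n * real n powr (-\<beta>)" by simp
qed

lemma V_mono:
  fixes Q G :: "nat \<Rightarrow> 'a measure"
  assumes Q: "\<And>n. prob_space (Q n)" and G: "\<And>n. prob_space (G n)" and sG: "\<And>n. sets (G n) = sets (Q n)"
    and b: "0 \<le> \<beta>2" "\<beta>2 \<le> \<beta>1" and n: "1 \<le> n"
  shows "V Q G \<beta>1 n \<le> V Q G \<beta>2 n"
proof -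
  define e1 where "e1 = real n powr (-\<beta>1)"
  define e2 where "e2 = real n powr (-\<beta>2)"
  have e2p: "0 < e2" using n by (simp add: e2_def)
  have e2l: "e2 \<le> 1" unfolding e2_def by (rule eps_facts(2)[OF b(1)])
  have e12: "e1 \<le> e2" unfolding e1_def e2_def using n b by (intro powr_mono) auto
  have e1p: "0 \<le> e1" by (simp add: e1_def)
  define t where "t = e1 / e2"
  have t: "0 \<le> t" "t \<le> 1" using e1p e2p e12 by (auto simp: t_def)
  have te: "t * e2 = e1" using e2p by (simp add: t_def)
  define P where "P = mixture e2 (Q n) (G n)"
  have Pp: "prob_space P" unfolding P_def using Q G sG e2p e2l by (intro prob_space_mixture) auto
  have sP: "sets P = sets (Q n)" by (simp add: P_def)
  have mix: "mixture e1 (Q n) (G n) = mixture t (Q n) P"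
    unfolding P_def using mixture_mixture[OF Q G sG, of e2 t] e2p e2l t te by simp
  show ?thesis
    unfolding V_def e1_def[symmetric] e2_def[symmetric] mix P_def[symmetric]
  proof (rule TV_le)
    fix A assume A: "A \<in> sets (PiM {..<n} (\<lambda>_. Q n))"
    have "\<bar>measure (PiM {..<n} (\<lambda>_. Q n)) A - measure (PiM {..<n} (\<lambda>i. mixture ((\<lambda>_. t) i) (Q n) P)) A\<bar>
      \<le> TV (PiM {..<n} (\<lambda>_. Q n)) (PiM {..<n} (\<lambda>_. P))"
      using mono_claim[OF Q Pp sP, of "{..<n}"] t A by auto
    then show "\<bar>measure (PiM {..<n} (\<lambda>_. Q n)) A - measure (PiM {..<n} (\<lambda>_. mixture t (Q n) P)) A\<bar>
      \<le> TV (PiM {..<n} (\<lambda>_. Q n)) (PiM {..<n} (\<lambda>_. P))" by simp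
  qed
qed



theorem lemma1:
  fixes Q G :: "nat \<Rightarrow> 'a measure"
  assumes "\<And>n. prob_space (Q n)"
    and "\<And>n. prob_space (G n)"
    and "\<And>n. sets (G n) = sets (Q n)"
  shows "0 \<le> beta_lower Q G \<and> beta_lower Q G \<le> beta_upper Q G \<and> beta_upper Q G \<le> 1"
proof -
  note Q = assms(1) and G = assms(2) and sG = assms(3)
  define Su where "Su = {\<beta>. \<beta> \<ge> 0 \<and> (\<lambda>n. V Q G \<beta> n) \<longlonglongrightarrow> 0}"
  define Sl where "Sl = {\<beta>. \<beta> \<ge> 0 \<and> (\<lambda>n. V Q G \<beta> n) \<longlonglongrightarrow> 1}"
  have big: "\<beta> \<in> Su" if b: "1 < \<beta>" for \<beta>
  proof -
    have lim: "(\<lambda>n. real n powr (1 - \<beta>)) \<longlonglongrightarrow> 0"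
      using b by (intro tendsto_neg_powr filterlim_real_sequentially) auto
    have ev: "eventually (\<lambda>n. V Q G \<beta> n \<le> real n powr (1 - \<beta>)) sequentially"
    proof (rule eventually_sequentiallyI[of 1])
      fix n :: nat assume n: "1 \<le> n"
      have "V Q G \<beta> n \<le> real n * real n powr (-\<beta>)" using b by (intro V_small[OF Q G sG]) auto
      also have "\<dots> = real n powr (1 - \<beta>)"
        using n by (simp add: powr_diff powr_minus_divide)
      finally show "V Q G \<beta> n \<le> real n powr (1 - \<beta>)" .
    qed
    have "(\<lambda>n. V Q G \<beta> n) \<longlonglongrightarrow> 0"
      using b by (intro tendsto_sandwich[OF _ ev tendsto_const lim] always_eventually allI V_nonneg[OF Q G sG]) auto
    then show ?thesis using b by (simp add: Su_def)
  qed
  have comp: "\<beta>1 \<le> \<beta>2" if "\<beta>1 \<in> Sl" "\<beta>2 \<in> Su" for \<beta>1 \<beta>2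
  proof (rule ccontr)
    assume "\<not> \<beta>1 \<le> \<beta>2"
    then have lt: "\<beta>2 \<le> \<beta>1" by simp
    have l1: "(\<lambda>n. V Q G \<beta>1 n) \<longlonglongrightarrow> 1" and l2: "(\<lambda>n. V Q G \<beta>2 n) \<longlonglongrightarrow> 0" and b2: "0 \<le> \<beta>2"
      using that by (auto simp: Sl_def Su_def)
    have "eventually (\<lambda>n. V Q G \<beta>1 n \<le> V Q G \<beta>2 n) sequentially"
      by (rule eventually_sequentiallyI[of 1]) (rule V_mono[OF Q G sG b2 lt])
    then have "(1::real) \<le> 0" by (rule tendsto_le[OF trivial_limit_sequentially l2 l1])
    then show False by simp
  qed
  have Su_ne: "Su \<noteq> {}" using big[of 2] by auto
  have Su_bdd: "bdd_below Su" by (auto simp: Su_def intro!: bdd_belowI[of _ 0])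
  have infge: "0 \<le> Inf Su" using Su_ne by (intro cInf_greatest) (auto simp: Su_def)
  have infle: "Inf Su \<le> 1"
  proof (rule field_le_epsilon)
    fix e :: real assume e: "0 < e"
    show "Inf Su \<le> 1 + e" using big[of "1 + e"] e Su_bdd by (intro cInf_lower) auto
  qed
  have Sl_le: "x \<le> Inf Su" if "x \<in> insert 0 Sl" for x
  proof (cases "x = 0")
    case True then show ?thesis using infge by simp
  next
    case False then have "x \<in> Sl" using that by simp
    then show ?thesis using comp by (intro cInf_greatest[OF Su_ne]) auto
  qed
  have Sl_bdd: "bdd_above (insert 0 Sl)" using Sl_le by (intro bdd_aboveI) 
  have lo: "0 \<le> Sup (insert 0 Sl)" using Sl_bdd by (intro cSup_upper) auto
  have lu: "Sup (insert 0 Sl) \<le> Inf Su" using Sl_le by (intro cSup_least) auto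
  show ?thesis using lo lu infle unfolding beta_lower_def beta_upper_def Sl_def[symmetric] Su_def[symmetric]
    by simp
qed

end
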